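(* In the setting below, for any integer $k$ with $-g(K)\le k\le g(K)$ and any nonzero $a\in B'_k$, there is no element $b\in\widehat{CFD}(X_K^{[n]})$ with $D_1\circ D_2(b)=D_{123}(a)$ or with $D_1\circ D_{12}(b)=D_{123}(a)$.
   Context: Over $\mathbb F=\mathbb Z/2$. Let $K$ be a nontrivial knot of genus $g(K)$ in an $L$-space integral homology sphere, $C^-=CFK^-(K)$, a free $\mathbb F[U]$-complex with Alexander filtration $\cdots\subset\mathcal F_i\subset\mathcal F_{i+1}\subset\cdots$, $A(x)=\min\{i: x\in\mathcal F_i\}$, $U$ lowering $A$ by one, assumed reduced. A filtered basis is an $\mathbb F[U]$-basis whose images in the associated graded module form a basis. A vertically simplified basis is a filtered basis $\{\tilde\xi_0,\dots,\tilde\xi_{2m}\}$ with $A(\tilde\xi_{2j-1})-A(\tilde\xi_{2j})=h_j>0$, $\partial\tilde\xi_{2j-1}\equiv\tilde\xi_{2j}\pmod{UC^-}$ ($1\le j\le m$) and $\partial\tilde\xi_{2i}\equiv0\pmod{UC^-}$. A horizontally simplified basis is a filtered basis $\{\tilde\eta_0,\dots,\tilde\eta_{2m}\}$ with $A(\tilde\eta_{2j})-A(\tilde\eta_{2j-1})=\ell_j>0$, $\partial\tilde\eta_{2j-1}\equiv U^{\ell_j}\tilde\eta_{2j}\pmod{\mathcal F_{A(\tilde\eta_{2j-1})-1}}$, and $A(\partial\tilde\eta_{2i})<A(\tilde\eta_{2i})$. Fix such bases with the property that each $\tilde\xi_p$ is an $\mathbb F[U]$-combination of those $\tilde\eta_q$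 with $A(a_{p,q}\tilde\eta_q)=A(\tilde\xi_p)$, and vice versa. Let $N=\widehat{CFD}(X_K^{[n]})$ (any integer framing $n$), given by the following model: $\iota_0N$ has bases $\{\xi_p\}$ and $\{\eta_p\}$ related by the change-of-basis coefficients of $\{\tilde\xi_p\},\{\tilde\eta_p\}$ evaluated at $U=0$; each element of $\iota_0N$ inherits the Alexander grading of the corresponding element of $C^-$; $\iota_1N$ has basis $\{\kappa^j_1,\dots,\kappa^j_{h_j}\}_j\cup\{\lambda^j_1,\dots,\lambda^j_{\ell_j}\}_j$ together with generators of an "unstable chain". Coefficient maps: vertical chains $\xi_{2j-1}\xrightarrow{D_1}\kappa^j_1\xleftarrow{D_{23}}\kappa^j_2\xleftarrow{D_{23}}\cdots\xleftarrow{D_{23}}\kappa^j_{h_j}\xleftarrow{D_{123}}\xi_{2j}$; horizontal chains $\eta_{2j-1}\xrightarrow{D_3}\lambda^j_1\xrightarrow{D_{23}}\cdots\xrightarrow{D_{23}}\lambda^j_{\ell_j}\xrightarrow{D_2}\eta_{2j}$; and an unstable chain connecting $\xi_0$ to $\eta_0$ depending on $t=n-2\tau(K)$ (where $\tau(K)=A(\tilde\xi_0)$): for $t>0$, $\xi_0\xrightarrow{D_1}\mu_1\xleftarrow{D_{23}}\cdots\xleftarrow{D_{23}}\mu_t\xleftarrow{D_3}\eta_0$; for $t=0$, $\xi_0\xrightarrow{D_1}\nu_1\xleftarrow{D_\emptyset}\nu_2\xrightarrow{D_2}\eta_0$ (for an $L$-space knot, instead $\xi_0\xrightarrow{D_{12}}\eta_0$);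 for $t<0$, $\xi_0\xrightarrow{D_{12}}\nu_1\xleftarrow{D_\emptyset}\nu_2\xrightarrow{D_3}\mu_1\xrightarrow{D_{23}}\cdots\xrightarrow{D_{23}}\mu_{|t|}\xrightarrow{D_2}\eta_0$ (for an $L$-space knot, instead $\xi_0\xrightarrow{D_{123}}\mu_1\xrightarrow{D_{23}}\cdots\xrightarrow{D_{23}}\mu_{|t|}\xrightarrow{D_2}\eta_0$). Here an arrow $x\xrightarrow{D_I}y$ means $y$ appears in $D_I(x)$, the $D_I$ being extended linearly. $B_k\subset\iota_0N$ is the span of elements of Alexander grading $k$, and $B'_k=B_k\cap\operatorname{span}\{\xi_2,\xi_4,\dots,\xi_{2m}\}\cap\operatorname{span}\{\eta_1,\eta_3,\dots,\eta_{2m-1}\}$. *)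

theory Defs
  imports "HOL-Library.Z2" "HOL-Library.Function_Algebras" "HOL-Computational_Algebra.Polynomial"
begin

section \<open>The filtered complex C^- = CFK^-(K) over F[U], F = Z/2\<close>

text \<open>C^- is modelled as the free F[U]-module F[U]^r (r = rank), elements being coordinate
  vectors (nat => bit poly) supported on indices < r.  The Alexander filtration is given by
  integer gradings gr of the standard generators: U^s e_p lies in filtration level gr p - s.
  (Every free filtered F[U]-complex admitting a filtered basis is of this form.)\<close>

type_synonym cvec = "nat \<Rightarrow> bit poly"

definition Cmod :: "nat \<Rightarrow> cvec set" where
  "Cmod r = {v. \<forall>p\<ge>r. v p = 0}"

definition psmul :: "bit poly \<Rightarrow> cvec \<Rightarrow> cvec" where
  "psmul f v = (\<lambda>p. f * v p)"

definition Uop :: "cvec \<Rightarrow> cvec" where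
  "Uop v = psmul [:0, 1:] v"

definition UC :: "nat \<Rightarrow> cvec set" where
  "UC r = Uop ` Cmod r"

definition Filt :: "nat \<Rightarrow> (nat \<Rightarrow> int) \<Rightarrow> int \<Rightarrow> cvec set" where
  "Filt r gr i = {v \<in> Cmod r. \<forall>p<r. \<forall>s. poly.coeff (v p) s \<noteq> 0 \<longrightarrow> gr p - int s \<le> i}"

text \<open>A(x) = min {i. x in F_i}  (used only for nonzero x)\<close>
definition Alex :: "nat \<Rightarrow> (nat \<Rightarrow> int) \<Rightarrow> cvec \<Rightarrow> int" where
  "Alex r gr v = (LEAST i. v \<in> Filt r gr i)"

definition dmap :: "nat \<Rightarrow> (nat \<Rightarrow> nat \<Rightarrow> bit poly) \<Rightarrow> cvec \<Rightarrow> cvec" where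
  "dmap r M v = (\<lambda>q. if q < r then (\<Sum>p<r. v p * M p q) else 0)"

definition filtered_complex :: "nat \<Rightarrow> (nat \<Rightarrow> int) \<Rightarrow> (nat \<Rightarrow> nat \<Rightarrow> bit poly) \<Rightarrow> bool" where
  "filtered_complex r gr M \<longleftrightarrow>
     (\<forall>v\<in>Cmod r. dmap r M (dmap r M v) = 0) \<and>
     (\<forall>i. \<forall>v\<in>Filt r gr i. dmap r M v \<in> Filt r gr i)"

definition reduced :: "nat \<Rightarrow> (nat \<Rightarrow> int) \<Rightarrow> (nat \<Rightarrow> nat \<Rightarrow> bit poly) \<Rightarrow> bool" where
  "reduced r gr M \<longleftrightarrow>
     (\<forall>i. \<forall>v\<in>Filt r gr i. \<exists>w\<in>Cmod r. \<exists>u\<in>Filt r gr (i - 1). dmap r M v = Uop w + u)"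

definition lincomb :: "nat \<Rightarrow> (nat \<Rightarrow> bit poly) \<Rightarrow> (nat \<Rightarrow> cvec) \<Rightarrow> cvec" where
  "lincomb r c y = (\<Sum>q<r. psmul (c q) (y q))"

definition FUbasis :: "nat \<Rightarrow> (nat \<Rightarrow> cvec) \<Rightarrow> bool" where
  "FUbasis r y \<longleftrightarrow> (\<forall>q<r. y q \<in> Cmod r) \<and>
     (\<forall>v\<in>Cmod r. \<exists>!c. (\<forall>q\<ge>r. c q = 0) \<and> v = lincomb r c y)"

text \<open>the F-basis candidates U^s [y_q] of the graded piece F_i / F_(i-1)\<close>
definition grpiece :: "nat \<Rightarrow> (nat \<Rightarrow> int) \<Rightarrow> (nat \<Rightarrow> cvec) \<Rightarrow> int \<Rightarrow> (nat \<times> nat) set" where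
  "grpiece r gr y i = {(q, s). q < r \<and> Alex r gr (y q) - int s = i}"

definition grsum :: "(nat \<Rightarrow> cvec) \<Rightarrow> (nat \<times> nat) set \<Rightarrow> cvec" where
  "grsum y T = (\<Sum>(q, s)\<in>T. psmul (monom 1 s) (y q))"

text \<open>filtered basis: an F[U]-basis whose images in the associated graded module
  (graded F[U]-module, U of degree -1) form a basis, i.e. in each graded piece F_i/F_(i-1)
  the classes U^s [y_q] with A(y_q) - s = i form an F-basis\<close>
definition filtered_basis :: "nat \<Rightarrow> (nat \<Rightarrow> int) \<Rightarrow> (nat \<Rightarrow> cvec) \<Rightarrow> bool" where
  "filtered_basis r gr y \<longleftrightarrow> FUbasis r y \<and>
     (\<forall>i. (\<forall>v\<in>Filt r gr i. \<exists>T. T \<subseteq> grpiece r gr y i \<and> finite T \<and>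
                                   v - grsum y T \<in> Filt r gr (i - 1)) \<and>
          (\<forall>T. T \<subseteq> grpiece r gr y i \<and> finite T \<and> T \<noteq> {} \<longrightarrow> grsum y T \<notin> Filt r gr (i - 1)))"

definition vert_simplified ::
  "nat \<Rightarrow> (nat \<Rightarrow> int) \<Rightarrow> (nat \<Rightarrow> nat \<Rightarrow> bit poly) \<Rightarrow> nat \<Rightarrow> (nat \<Rightarrow> cvec) \<Rightarrow> bool" where
  "vert_simplified r gr M m xi \<longleftrightarrow> r = 2 * m + 1 \<and> filtered_basis r gr xi \<and>
     (\<forall>j\<in>{1..m}. Alex r gr (xi (2*j - 1)) - Alex r gr (xi (2*j)) > 0 \<and>
                 dmap r M (xi (2*j - 1)) - xi (2*j) \<in> UC r) \<and>
     (\<forall>i\<le>m. dmap r M (xi (2*i)) \<in> UC r)"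

definition hV :: "nat \<Rightarrow> (nat \<Rightarrow> int) \<Rightarrow> (nat \<Rightarrow> cvec) \<Rightarrow> nat \<Rightarrow> nat" where
  "hV r gr xi j = nat (Alex r gr (xi (2*j - 1)) - Alex r gr (xi (2*j)))"

definition lH :: "nat \<Rightarrow> (nat \<Rightarrow> int) \<Rightarrow> (nat \<Rightarrow> cvec) \<Rightarrow> nat \<Rightarrow> nat" where
  "lH r gr eta j = nat (Alex r gr (eta (2*j)) - Alex r gr (eta (2*j - 1)))"

definition horiz_simplified ::
  "nat \<Rightarrow> (nat \<Rightarrow> int) \<Rightarrow> (nat \<Rightarrow> nat \<Rightarrow> bit poly) \<Rightarrow> nat \<Rightarrow> (nat \<Rightarrow> cvec) \<Rightarrow> bool" where
  "horiz_simplified r gr M m eta \<longleftrightarrow> r = 2 * m + 1 \<and> filtered_basis r gr eta \<and>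
     (\<forall>j\<in>{1..m}. Alex r gr (eta (2*j)) - Alex r gr (eta (2*j - 1)) > 0 \<and>
                 dmap r M (eta (2*j - 1)) - psmul (monom 1 (lH r gr eta j)) (eta (2*j))
                   \<in> Filt r gr (Alex r gr (eta (2*j - 1)) - 1)) \<and>
     (\<forall>i\<le>m. dmap r M (eta (2*i)) \<in> Filt r gr (Alex r gr (eta (2*i)) - 1))"

definition bases_compatible ::
  "nat \<Rightarrow> (nat \<Rightarrow> int) \<Rightarrow> (nat \<Rightarrow> cvec) \<Rightarrow> (nat \<Rightarrow> cvec) \<Rightarrow>
   (nat \<Rightarrow> nat \<Rightarrow> bit poly) \<Rightarrow> (nat \<Rightarrow> nat \<Rightarrow> bit poly) \<Rightarrow> bool" where
  "bases_compatible r gr xi eta A B \<longleftrightarrow>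
     (\<forall>p<r. (\<forall>q\<ge>r. A p q = 0) \<and> xi p = lincomb r (A p) eta \<and>
            (\<forall>q<r. A p q \<noteq> 0 \<longrightarrow> Alex r gr (psmul (A p q) (eta q)) = Alex r gr (xi p))) \<and>
     (\<forall>p<r. (\<forall>q\<ge>r. B p q = 0) \<and> eta p = lincomb r (B p) xi \<and>
            (\<forall>q<r. B p q \<noteq> 0 \<longrightarrow> Alex r gr (psmul (B p q) (xi q)) = Alex r gr (eta p)))"

text \<open>genus: top Alexander grading of HFK-hat = gr(C^-/U) (C^- reduced)\<close>
definition knot_genus :: "nat \<Rightarrow> (nat \<Rightarrow> int) \<Rightarrow> (nat \<Rightarrow> cvec) \<Rightarrow> int" where
  "knot_genus r gr xi = Max {Alex r gr (xi p) | p. p < r}"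

definition tau :: "nat \<Rightarrow> (nat \<Rightarrow> int) \<Rightarrow> (nat \<Rightarrow> cvec) \<Rightarrow> int" where
  "tau r gr xi = Alex r gr (xi 0)"

section \<open>The type D structure N = CFD-hat of the framed knot complement\<close>

datatype gen = Xi nat | Ka nat nat | La nat nat | Mu nat | Nu nat

text \<open>elements of N: F-coordinates w.r.t. the generators xi_p (of iota_0 N), kappa^j_i,
  lambda^j_i, mu_i, nu_i (of iota_1 N)\<close>
type_synonym nvec = "gen \<Rightarrow> bit"

definition gens :: "nat \<Rightarrow> (nat \<Rightarrow> nat) \<Rightarrow> (nat \<Rightarrow> nat) \<Rightarrow> int \<Rightarrow> bool \<Rightarrow> gen set" where
  "gens m h l t L =
     {Xi p | p. p \<le> 2*m} \<union>
     {Ka j i | j i. 1 \<le> j \<and> j \<le> m \<and> 1 \<le> i \<and> i \<le> h j} \<union>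
     {La j i | j i. 1 \<le> j \<and> j \<le> m \<and> 1 \<le> i \<and> i \<le> l j} \<union>
     {Mu i | i. 1 \<le> i \<and> int i \<le> \<bar>t\<bar>} \<union>
     {Nu i | i. (i = 1 \<or> i = 2) \<and> t \<le> 0 \<and> \<not> L}"

definition Nmod :: "nat \<Rightarrow> (nat \<Rightarrow> nat) \<Rightarrow> (nat \<Rightarrow> nat) \<Rightarrow> int \<Rightarrow> bool \<Rightarrow> nvec set" where
  "Nmod m h l t L = {v. \<forall>g. g \<notin> gens m h l t L \<longrightarrow> v g = 0}"

definition unitv :: "gen \<Rightarrow> nvec" where
  "unitv g = (\<lambda>x. if x = g then 1 else 0)"

definition iota0 :: "(nat \<Rightarrow> bit) \<Rightarrow> nvec" where
  "iota0 c = (\<lambda>x. case x of Xi p \<Rightarrow> c p | _ \<Rightarrow> 0)"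

definition xiv :: "nat \<Rightarrow> nat \<Rightarrow> bit" where
  "xiv p = (\<lambda>q. if q = p then 1 else 0)"

text \<open>eta_p in xi-coordinates: change-of-basis coefficients evaluated at U = 0\<close>
definition etav :: "nat \<Rightarrow> (nat \<Rightarrow> nat \<Rightarrow> bit poly) \<Rightarrow> nat \<Rightarrow> nat \<Rightarrow> bit" where
  "etav m B p = (\<lambda>q. if q \<le> 2*m then poly (B p q) 0 else 0)"

definition linext :: "gen set \<Rightarrow> (gen \<Rightarrow> nvec) \<Rightarrow> nvec \<Rightarrow> nvec" where
  "linext G f v = (\<Sum>g\<in>G. (\<lambda>x. v g * f g x))"

definition D1gen :: "nat \<Rightarrow> int \<Rightarrow> bool \<Rightarrow> gen \<Rightarrow> nvec" where
  "D1gen m t L g = (case g of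
     Xi p \<Rightarrow> (if odd p \<and> p \<le> 2*m then unitv (Ka ((p + 1) div 2) 1)
              else if p = 0 \<and> t > 0 then unitv (Mu 1)
              else if p = 0 \<and> t = 0 \<and> \<not> L then unitv (Nu 1)
              else 0)
   | _ \<Rightarrow> 0)"

definition D123gen :: "nat \<Rightarrow> (nat \<Rightarrow> nat) \<Rightarrow> int \<Rightarrow> bool \<Rightarrow> gen \<Rightarrow> nvec" where
  "D123gen m h t L g = (case g of
     Xi p \<Rightarrow> (if even p \<and> 2 \<le> p \<and> p \<le> 2*m then unitv (Ka (p div 2) (h (p div 2)))
              else if p = 0 \<and> t < 0 \<and> L then unitv (Mu 1)
              else 0)
   | _ \<Rightarrow> 0)"

definition D12gen :: "nat \<Rightarrow> (nat \<Rightarrow> nat \<Rightarrow> bit poly) \<Rightarrow> int \<Rightarrow> bool \<Rightarrow> gen \<Rightarrow> nvec" where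
  "D12gen m B t L g = (case g of
     Xi p \<Rightarrow> (if p = 0 \<and> t < 0 \<and> \<not> L then unitv (Nu 1)
              else if p = 0 \<and> t = 0 \<and> L then iota0 (etav m B 0)
              else 0)
   | _ \<Rightarrow> 0)"

definition D2gen :: "nat \<Rightarrow> (nat \<Rightarrow> nat) \<Rightarrow> (nat \<Rightarrow> nat \<Rightarrow> bit poly) \<Rightarrow> int \<Rightarrow> bool \<Rightarrow> gen \<Rightarrow> nvec" where
  "D2gen m l B t L g = (case g of
     La j i \<Rightarrow> (if 1 \<le> j \<and> j \<le> m \<and> i = l j then iota0 (etav m B (2*j)) else 0)
   | Nu i \<Rightarrow> (if i = 2 \<and> t = 0 \<and> \<not> L then iota0 (etav m B 0) else 0)
   | Mu i \<Rightarrow> (if t < 0 \<and> int i = - t then iota0 (etav m B 0) else 0)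
   | _ \<Rightarrow> 0)"

definition D1 :: "nat \<Rightarrow> (nat \<Rightarrow> nat) \<Rightarrow> (nat \<Rightarrow> nat) \<Rightarrow> int \<Rightarrow> bool \<Rightarrow> nvec \<Rightarrow> nvec" where
  "D1 m h l t L = linext (gens m h l t L) (D1gen m t L)"

definition D123 :: "nat \<Rightarrow> (nat \<Rightarrow> nat) \<Rightarrow> (nat \<Rightarrow> nat) \<Rightarrow> int \<Rightarrow> bool \<Rightarrow> nvec \<Rightarrow> nvec" where
  "D123 m h l t L = linext (gens m h l t L) (D123gen m h t L)"

definition D12 :: "nat \<Rightarrow> (nat \<Rightarrow> nat) \<Rightarrow> (nat \<Rightarrow> nat) \<Rightarrow> (nat \<Rightarrow> nat \<Rightarrow> bit poly) \<Rightarrow> int \<Rightarrow> bool \<Rightarrow> nvec \<Rightarrow> nvec" where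
  "D12 m h l B t L = linext (gens m h l t L) (D12gen m B t L)"

definition D2 :: "nat \<Rightarrow> (nat \<Rightarrow> nat) \<Rightarrow> (nat \<Rightarrow> nat) \<Rightarrow> (nat \<Rightarrow> nat \<Rightarrow> bit poly) \<Rightarrow> int \<Rightarrow> bool \<Rightarrow> nvec \<Rightarrow> nvec" where
  "D2 m h l B t L = linext (gens m h l t L) (D2gen m l B t L)"

definition F2span :: "(nat \<Rightarrow> bit) set \<Rightarrow> (nat \<Rightarrow> bit) set" where
  "F2span S = {\<Sum>x\<in>T. x | T. T \<subseteq> S \<and> finite T}"

definition Bk :: "nat \<Rightarrow> (nat \<Rightarrow> int) \<Rightarrow> nat \<Rightarrow> (nat \<Rightarrow> cvec) \<Rightarrow> (nat \<Rightarrow> cvec) \<Rightarrow>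
                  (nat \<Rightarrow> nat \<Rightarrow> bit poly) \<Rightarrow> int \<Rightarrow> (nat \<Rightarrow> bit) set" where
  "Bk r gr m xi eta B k = F2span ({xiv p | p. p \<le> 2*m \<and> Alex r gr (xi p) = k} \<union>
                                  {etav m B p | p. p \<le> 2*m \<and> Alex r gr (eta p) = k})"

definition Bprime :: "nat \<Rightarrow> (nat \<Rightarrow> int) \<Rightarrow> nat \<Rightarrow> (nat \<Rightarrow> cvec) \<Rightarrow> (nat \<Rightarrow> cvec) \<Rightarrow>
                  (nat \<Rightarrow> nat \<Rightarrow> bit poly) \<Rightarrow> int \<Rightarrow> (nat \<Rightarrow> bit) set" where
  "Bprime r gr m xi eta B k = Bk r gr m xi eta B k
     \<inter> F2span {xiv (2*j) | j. 1 \<le> j \<and> j \<le> m}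
     \<inter> F2span {etav m B (2*j - 1) | j. 1 \<le> j \<and> j \<le> m}"

end

theory Submission
  imports Defs
begin

declare add_bit_eq_xor[simp del] mult_bit_eq_and[simp del]

lemma sum_fun_apply: "(\<Sum>g\<in>G. F g) x = (\<Sum>g\<in>G. F g x)"
  by (induct G rule: infinite_finite_induct) auto

lemma bit_add_self: "(x::bit) + x = 0" by (cases x) auto
lemma bitpoly_uminus: "- (p::bit poly) = p"
  by (rule poly_eqI) simp
lemma cvec_minus: "(v::cvec) - w = v + w"
proof (rule ext)
  fix x
  have "v x - w x = v x + - w x" by (rule diff_conv_add_uminus)
  then show "(v - w) x = (v + w) x" by (simp add: bitpoly_uminus)
qed
lemma cvec_add_self: "(v::cvec) + v = 0"
  by (metis cvec_minus diff_self)

lemma Uop_monom: "Uop v = psmul (monom 1 1) v"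
proof -
  have "[:0, 1:] = (monom 1 1 :: bit poly)"
    by (rule poly_eqI) (simp add: coeff_pCons coeff_monom split: nat.split)
  then show ?thesis unfolding Uop_def by simp
qed

lemma psmul_add: "psmul f (v + w) = psmul f v + psmul f w"
  unfolding psmul_def by (rule ext) (simp add: distrib_left)
lemma psmul_zero[simp]: "psmul f 0 = 0"
  unfolding psmul_def by (rule ext) simp
lemma psmul_sum: "psmul f (\<Sum>x\<in>X. g x) = (\<Sum>x\<in>X. psmul f (g x))"
  unfolding psmul_def by (rule ext) (simp add: sum_fun_apply sum_distrib_left)
lemma psmul_psmul: "psmul f (psmul g v) = psmul (f * g) v"
  unfolding psmul_def by (rule ext) (simp add: mult.assoc)
lemma psmul_one: "psmul 1 v = v"
  unfolding psmul_def by simp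
lemma psmul_monom0: "psmul (monom 1 0) v = v"
  unfolding psmul_def by (simp add: one_pCons[symmetric] monom_0)
lemma monom_mult_monom: "monom (1::bit) s * monom 1 t = monom 1 (s + t)"
  by (simp add: mult_monom)

lemma dmap_add: "dmap r M (v + w) = dmap r M v + dmap r M w"
  unfolding dmap_def by (rule ext) (simp add: distrib_right sum.distrib)
lemma dmap_zero[simp]: "dmap r M 0 = 0"
  unfolding dmap_def by (rule ext) simp
lemma dmap_sum: "dmap r M (\<Sum>x\<in>X. g x) = (\<Sum>x\<in>X. dmap r M (g x))"
  unfolding dmap_def by (rule ext) (auto simp add: sum_fun_apply sum_distrib_right intro: sum.swap)
lemma dmap_psmul: "dmap r M (psmul f v) = psmul f (dmap r M v)"
  unfolding dmap_def psmul_def by (rule ext) (simp add: sum_distrib_left mult.assoc)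

lemma Cmod_add: "v \<in> Cmod r \<Longrightarrow> w \<in> Cmod r \<Longrightarrow> v + w \<in> Cmod r"
  unfolding Cmod_def by simp
lemma Cmod_zero: "0 \<in> Cmod r" unfolding Cmod_def by simp
lemma Cmod_sum: "(\<And>x. x \<in> X \<Longrightarrow> g x \<in> Cmod r) \<Longrightarrow> (\<Sum>x\<in>X. g x) \<in> Cmod r"
  by (induct X rule: infinite_finite_induct) (auto simp: Cmod_add Cmod_zero)
lemma Cmod_psmul: "v \<in> Cmod r \<Longrightarrow> psmul f v \<in> Cmod r"
  unfolding Cmod_def psmul_def by simp
lemma Cmod_dmap: "dmap r M v \<in> Cmod r"
  unfolding Cmod_def dmap_def by simp

lemma FiltD: "v \<in> Filt r gr i \<Longrightarrow> p < r \<Longrightarrow> poly.coeff (v p) s \<noteq> 0 \<Longrightarrow> gr p - int s \<le> i"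
  unfolding Filt_def by blast
lemma FiltI: "v \<in> Cmod r \<Longrightarrow> (\<And>p s. p < r \<Longrightarrow> poly.coeff (v p) s \<noteq> 0 \<Longrightarrow> gr p - int s \<le> i) \<Longrightarrow> v \<in> Filt r gr i"
  unfolding Filt_def by blast
lemma Filt_Cmod: "v \<in> Filt r gr i \<Longrightarrow> v \<in> Cmod r" unfolding Filt_def by simp
lemma Filt_zero: "0 \<in> Filt r gr i" unfolding Filt_def by (simp add: Cmod_zero)
lemma Filt_add: "v \<in> Filt r gr i \<Longrightarrow> w \<in> Filt r gr i \<Longrightarrow> v + w \<in> Filt r gr i"
proof -
  assume v: "v \<in> Filt r gr i" and w: "w \<in> Filt r gr i"
  { fix p s assume "p < r" "poly.coeff ((v + w) p) s \<noteq> 0"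
    then have "poly.coeff (v p) s \<noteq> 0 \<or> poly.coeff (w p) s \<noteq> 0" by auto
    then have "gr p - int s \<le> i" using v w \<open>p < r\<close> unfolding Filt_def by auto }
  then show ?thesis using v w unfolding Filt_def by (auto simp: Cmod_add)
qed
lemma Filt_sum: "(\<And>x. x \<in> X \<Longrightarrow> g x \<in> Filt r gr i) \<Longrightarrow> (\<Sum>x\<in>X. g x) \<in> Filt r gr i"
  by (induct X rule: infinite_finite_induct) (auto simp: Filt_add Filt_zero)
lemma Filt_mono: "v \<in> Filt r gr i \<Longrightarrow> i \<le> j \<Longrightarrow> v \<in> Filt r gr j"
  unfolding Filt_def by force
lemma Filt_monom: "v \<in> Filt r gr i \<Longrightarrow> psmul (monom 1 s) v \<in> Filt r gr (i - int s)"
proof -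
  assume v: "v \<in> Filt r gr i"
  { fix p t assume pt: "p < r" "poly.coeff (psmul (monom 1 s) v p) t \<noteq> 0"
    then have "s \<le> t" "poly.coeff (v p) (t - s) \<noteq> 0"
      unfolding psmul_def by (auto simp: coeff_monom_mult split: if_splits)
    then have "gr p - int (t - s) \<le> i" using FiltD[OF v pt(1)] by blast
    then have "gr p - int t \<le> i - int s" using \<open>s \<le> t\<close> by simp }
  then show ?thesis using v Cmod_psmul unfolding Filt_def by auto
qed

lemma Filt_Uop: "w \<in> Cmod r \<Longrightarrow> Uop w \<in> Filt r gr i \<Longrightarrow> w \<in> Filt r gr (i + 1)"
proof -
  assume w: "w \<in> Cmod r" and U: "Uop w \<in> Filt r gr i"
  { fix p s assume ps: "p < r" "poly.coeff (w p) s \<noteq> 0"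
    have "poly.coeff (Uop w p) (Suc s) = poly.coeff (w p) s"
      unfolding Uop_monom psmul_def by (simp add: coeff_monom_mult)
    then have "gr p - int (Suc s) \<le> i" using FiltD[OF U ps(1)] ps(2) by metis
    then have "gr p - int s \<le> i + 1" by simp }
  then show ?thesis using w unfolding Filt_def by auto
qed

lemma Filt_psmul_iff:
  assumes f: "poly.coeff f 0 \<noteq> 0" and v: "v \<in> Cmod r"
  shows "psmul f v \<in> Filt r gr i \<longleftrightarrow> v \<in> Filt r gr i"
proof
  assume fv: "psmul f v \<in> Filt r gr i"
  { fix p s assume ps: "p < r" "poly.coeff (v p) s \<noteq> 0"
    define s0 where "s0 = (LEAST s. poly.coeff (v p) s \<noteq> 0)"
    have s0: "poly.coeff (v p) s0 \<noteq> 0" "s0 \<le> s"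
      using ps(2) unfolding s0_def by (auto intro: LeastI Least_le)
    have lt: "\<And>t. t < s0 \<Longrightarrow> poly.coeff (v p) t = 0"
      unfolding s0_def using not_less_Least by blast
    have "poly.coeff (f * v p) s0 = (\<Sum>i\<le>s0. poly.coeff f i * poly.coeff (v p) (s0 - i))"
      by (rule coeff_mult)
    also have "\<dots> = (\<Sum>i\<in>{0}. poly.coeff f i * poly.coeff (v p) (s0 - i))"
      by (rule sum.mono_neutral_right) (auto simp: lt)
    also have "\<dots> = poly.coeff f 0 * poly.coeff (v p) s0" by simp
    finally have "poly.coeff (psmul f v p) s0 \<noteq> 0"
      using f s0(1) unfolding psmul_def by simp
    then have "gr p - int s0 \<le> i" using fv ps unfolding Filt_def by auto
    then have "gr p - int s \<le> i" using s0(2) by simp }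
  then show "v \<in> Filt r gr i" using v unfolding Filt_def by auto
next
  assume vi: "v \<in> Filt r gr i"
  { fix p s assume ps: "p < r" "poly.coeff (psmul f v p) s \<noteq> 0"
    then have "(\<Sum>j\<le>s. poly.coeff f j * poly.coeff (v p) (s - j)) \<noteq> 0"
      unfolding psmul_def by (simp add: coeff_mult)
    then obtain j where j: "j \<le> s" "poly.coeff f j * poly.coeff (v p) (s - j) \<noteq> 0"
      by (meson atMost_iff sum.neutral)
    then have "poly.coeff (v p) (s - j) \<noteq> 0" by auto
    then have "gr p - int (s - j) \<le> i" using vi ps unfolding Filt_def by auto
    then have "gr p - int s \<le> i" using j by simp }
  then show "psmul f v \<in> Filt r gr i" using v Cmod_psmul unfolding Filt_def by auto
qed

lemma Alex_psmul:
  assumes "poly.coeff f 0 \<noteq> 0" "v \<in> Cmod r"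
  shows "Alex r gr (psmul f v) = Alex r gr v"
  unfolding Alex_def using Filt_psmul_iff[OF assms] by simp

lemma Alex_in_Filt:
  assumes v: "v \<in> Cmod r"
  shows "v \<in> Filt r gr (Alex r gr v)"
proof (cases "v = 0")
  case True then show ?thesis using Filt_zero by simp
next
  case False
  define S where "S = {gr p - int s | p s. p < r \<and> poly.coeff (v p) s \<noteq> 0}"
  have Ssub: "S \<subseteq> (\<lambda>(p,s). gr p - int s) ` (SIGMA p:{..<r}. {..degree (v p)})"
  proof
    fix x assume "x \<in> S"
    then obtain p s where ps: "x = gr p - int s" "p < r" "poly.coeff (v p) s \<noteq> 0" unfolding S_def by blast
    then have "s \<le> degree (v p)" by (simp add: le_degree)
    then show "x \<in> (\<lambda>(p,s). gr p - int s) ` (SIGMA p:{..<r}. {..degree (v p)})"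
      using ps by (intro image_eqI[of _ _ "(p,s)"]) auto
  qed
  have fin: "finite S" by (rule finite_subset[OF Ssub]) auto
  obtain p0 where "v p0 \<noteq> 0" using False by (auto simp: fun_eq_iff)
  then have p0: "p0 < r" using v unfolding Cmod_def by (metis (mono_tags, lifting) mem_Collect_eq not_le)
  obtain s0 where "poly.coeff (v p0) s0 \<noteq> 0" using \<open>v p0 \<noteq> 0\<close> by (meson leading_coeff_neq_0)
  then have ne: "S \<noteq> {}" unfolding S_def using p0 by auto
  have iff: "\<And>i. v \<in> Filt r gr i \<longleftrightarrow> Max S \<le> i"
  proof
    fix i assume "v \<in> Filt r gr i"
    then have "\<forall>x\<in>S. x \<le> i" unfolding S_def Filt_def by auto
    then show "Max S \<le> i" using fin ne by simp
  next
    fix i assume "Max S \<le> i"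
    then have "\<forall>x\<in>S. x \<le> i" using fin ne by (meson Max_ge order_trans)
    then show "v \<in> Filt r gr i" using v unfolding S_def Filt_def by blast
  qed
  have "Alex r gr v = Max S"
    unfolding Alex_def iff by (rule Least_equality) auto
  then show ?thesis using iff by simp
qed

declare add_bit_eq_xor[simp del] mult_bit_eq_and[simp del]


lemma finite_gens: "finite (gens m h l t L)"
proof -
  have a: "{Xi p | p. p \<le> 2*m} = Xi ` {..2*m}" by auto
  have b: "{Ka j i | j i. 1 \<le> j \<and> j \<le> m \<and> 1 \<le> i \<and> i \<le> h j}
     = (\<lambda>(j,i). Ka j i) ` (SIGMA j:{1..m}. {1..h j})" by auto
  have c: "{La j i | j i. 1 \<le> j \<and> j \<le> m \<and> 1 \<le> i \<and> i \<le> l j}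
     = (\<lambda>(j,i). La j i) ` (SIGMA j:{1..m}. {1..l j})" by auto
  have d: "{Mu i | i. 1 \<le> i \<and> int i \<le> \<bar>t\<bar>} \<subseteq> Mu ` {..nat \<bar>t\<bar>}" by auto
  have e: "{Nu i | i. (i = 1 \<or> i = 2) \<and> t \<le> 0 \<and> \<not> L} \<subseteq> Nu ` {1,2}" by auto
  show ?thesis unfolding gens_def a b c
    using finite_subset[OF d] finite_subset[OF e] by auto
qed

lemma Xi_in_gens: "p \<le> 2*m \<Longrightarrow> Xi p \<in> gens m h l t L"
  unfolding gens_def by auto

lemma linext_apply: "linext G f v x = (\<Sum>g\<in>G. v g * f g x)"
  unfolding linext_def sum_fun_apply ..

lemma D1gen_Ka: "1 \<le> j \<Longrightarrow> j \<le> m \<Longrightarrow>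
   D1gen m t L g (Ka j i) = (if g = Xi (2*j-1) \<and> i = 1 then 1 else 0)"
  unfolding D1gen_def unitv_def
  by (cases g) (auto elim!: oddE)

lemma D1_Ka: "1 \<le> j \<Longrightarrow> j \<le> m \<Longrightarrow>
   D1 m h l t L v (Ka j i) = (if i = 1 then v (Xi (2*j-1)) else 0)"
proof -
  assume j: "1 \<le> j" "j \<le> m"
  have "D1 m h l t L v (Ka j i) = (\<Sum>g\<in>gens m h l t L. (if g = Xi (2*j-1) then (if i = 1 then v g else 0) else 0))"
    unfolding D1_def linext_apply using D1gen_Ka[OF j] by (intro sum.cong) auto
  also have "\<dots> = (if i = 1 then v (Xi (2*j-1)) else 0)"
    using finite_gens Xi_in_gens[of "2*j-1" m h l t L] j by (simp add: sum.delta')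
  finally show ?thesis .
qed

lemma D123gen_Ka: "1 \<le> j \<Longrightarrow> j \<le> m \<Longrightarrow>
   D123gen m h t L g (Ka j i) = (if g = Xi (2*j) \<and> i = h j then 1 else 0)"
  unfolding D123gen_def unitv_def
  by (cases g) (auto elim!: evenE)

lemma D123_Ka: "1 \<le> j \<Longrightarrow> j \<le> m \<Longrightarrow>
   D123 m h l t L (iota0 a) (Ka j i) = (if i = h j then a (2*j) else 0)"
proof -
  assume j: "1 \<le> j" "j \<le> m"
  have "D123 m h l t L (iota0 a) (Ka j i) = (\<Sum>g\<in>gens m h l t L. (if g = Xi (2*j) then (if i = h j then iota0 a g else 0) else 0))"
    unfolding D123_def linext_apply using D123gen_Ka[OF j] by (intro sum.cong) auto
  also have "\<dots> = (if i = h j then a (2*j) else 0)"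
    using finite_gens Xi_in_gens[of "2*j" m h l t L] j by (simp add: sum.delta' iota0_def)
  finally show ?thesis .
qed

declare add_bit_eq_xor[simp del] mult_bit_eq_and[simp del]

definition Eset :: "nat \<Rightarrow> nat set" where "Eset m = {p. p \<le> 2*m \<and> even p}"
definition Espan :: "nat \<Rightarrow> (nat \<Rightarrow> nat \<Rightarrow> bit poly) \<Rightarrow> (nat \<Rightarrow> bit) set" where
  "Espan m B = {x. \<exists>\<delta>. \<forall>q. x q = (\<Sum>p\<in>Eset m. \<delta> p * etav m B p q)}"

lemma finite_Eset: "finite (Eset m)" unfolding Eset_def by auto

lemma Espan_0: "(\<lambda>q. 0) \<in> Espan m B"
  unfolding Espan_def by (intro CollectI exI[of _ "\<lambda>_. 0"]) simp

lemma Espan_etav: "p \<in> Eset m \<Longrightarrow> etav m B p \<in> Espan m B"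
  unfolding Espan_def
proof (intro CollectI exI[of _ "\<lambda>x. if x = p then 1 else 0"] allI)
  fix q assume p: "p \<in> Eset m"
  have "(\<Sum>pa\<in>Eset m. (if pa = p then 1 else 0) * etav m B pa q)
      = (\<Sum>pa\<in>Eset m. if pa = p then etav m B pa q else 0)"
    by (intro sum.cong) auto
  also have "\<dots> = etav m B p q" using p finite_Eset by (simp add: sum.delta')
  finally show "etav m B p q = (\<Sum>pa\<in>Eset m. (if pa = p then 1 else 0) * etav m B pa q)" by simp
qed

lemma Espan_add: "x \<in> Espan m B \<Longrightarrow> y \<in> Espan m B \<Longrightarrow> (\<lambda>q. x q + y q) \<in> Espan m B"
proof -
  assume "x \<in> Espan m B" "y \<in> Espan m B"
  then obtain d1 d2 where "\<forall>q. x q = (\<Sum>p\<in>Eset m. d1 p * etav m B p q)"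
     "\<forall>q. y q = (\<Sum>p\<in>Eset m. d2 p * etav m B p q)" unfolding Espan_def by auto
  then show ?thesis unfolding Espan_def
    by (intro CollectI exI[of _ "\<lambda>p. d1 p + d2 p"]) (simp add: distrib_right sum.distrib)
qed

lemma Espan_smult: "x \<in> Espan m B \<Longrightarrow> (\<lambda>q. c * x q) \<in> Espan m B"
proof -
  assume "x \<in> Espan m B"
  then obtain d1 where "\<forall>q. x q = (\<Sum>p\<in>Eset m. d1 p * etav m B p q)"
    unfolding Espan_def by auto
  then show ?thesis unfolding Espan_def
    by (intro CollectI exI[of _ "\<lambda>p. c * d1 p"]) (simp add: sum_distrib_left mult.assoc)
qed

lemma Espan_sum: "finite G \<Longrightarrow> (\<And>g. g \<in> G \<Longrightarrow> f g \<in> Espan m B) \<Longrightarrow> (\<lambda>q. \<Sum>g\<in>G. f g q) \<in> Espan m B"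
proof (induct G rule: finite_induct)
  case empty then show ?case using Espan_0 by simp
next
  case (insert x F)
  then show ?case using Espan_add[of "f x" m B "\<lambda>q. \<Sum>g\<in>F. f g q"] by simp
qed

lemma D2gen_Xi: "(\<lambda>q. D2gen m l B t L g (Xi q)) \<in> Espan m B"
proof (cases g)
  case (La j i)
  show ?thesis
  proof (cases "1 \<le> j \<and> j \<le> m \<and> i = l j")
    case True
    then have "(\<lambda>q. D2gen m l B t L g (Xi q)) = etav m B (2*j)"
      using La by (simp add: D2gen_def iota0_def)
    then show ?thesis using True Espan_etav[of "2*j" m B] by (simp add: Eset_def)
  next
    case False then have "(\<lambda>q. D2gen m l B t L g (Xi q)) = (\<lambda>q. 0)" using La by (auto simp add: D2gen_def)
    then show ?thesis using Espan_0 by simp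
  qed
next
  case (Nu i)
  then show ?thesis using Espan_0 Espan_etav[of 0 m B]
    by (auto simp add: D2gen_def iota0_def Eset_def)
next
  case (Mu i)
  then show ?thesis using Espan_0 Espan_etav[of 0 m B]
    by (auto simp add: D2gen_def iota0_def Eset_def)
qed (simp_all add: D2gen_def Espan_0)

lemma D12gen_Xi: "(\<lambda>q. D12gen m B t L g (Xi q)) \<in> Espan m B"
  using Espan_0 Espan_etav[of 0 m B]
  by (cases g) (auto simp add: D12gen_def iota0_def Eset_def unitv_def)

declare add_bit_eq_xor[simp del] mult_bit_eq_and[simp del]

definition rho :: "cvec \<Rightarrow> nat \<Rightarrow> bit" where "rho v = (\<lambda>p. poly.coeff (v p) 0)"

lemma rho_add: "rho (v + w) = rho v + rho w" unfolding rho_def by (rule ext) simp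
lemma rho_zero[simp]: "rho 0 = 0" unfolding rho_def by (rule ext) simp
lemma rho_sum: "rho (\<Sum>x\<in>X. g x) = (\<Sum>x\<in>X. rho (g x))"
  unfolding rho_def by (rule ext) (simp add: sum_fun_apply coeff_sum)
lemma rho_psmul: "rho (psmul f v) = (\<lambda>p. poly.coeff f 0 * rho v p)"
  unfolding rho_def psmul_def by (rule ext) (simp add: coeff_mult_0)
lemma rho_Uop: "rho (Uop v) = 0"
  unfolding Uop_def rho_psmul by (rule ext) simp
lemma rho_UC: "v \<in> UC r \<Longrightarrow> rho v = 0"
  unfolding UC_def using rho_Uop by auto
lemma bitfun_add_self: "(f::nat\<Rightarrow>bit) + f = 0"
  by (rule ext) (simp add: bit_add_self)

lemma rho_diff_UC: "v - w \<in> UC r \<Longrightarrow> rho v = rho w"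
proof -
  assume "v - w \<in> UC r"
  then have "rho (v + w) = 0" using rho_UC cvec_minus by metis
  then have "rho v + rho w = 0" by (simp add: rho_add)
  then have "rho v + rho w + rho w = rho w" by simp
  then show ?thesis by (simp add: add.assoc bitfun_add_self)
qed

lemma rho0_Uop:
  assumes v: "v \<in> Cmod r" and z: "rho v = 0"
  shows "\<exists>w\<in>Cmod r. v = Uop w"
proof -
  define w where "w = (\<lambda>p. SOME q. v p = pCons 0 q)"
  have ex: "\<And>p. \<exists>q. v p = pCons 0 q"
  proof -
    fix p
    obtain a q where "v p = pCons a q" by (rule pCons_cases)
    moreover have "a = 0" using z calculation unfolding rho_def by (metis coeff_pCons_0 fun_cong zero_fun_apply)
    ultimately show "\<exists>q. v p = pCons 0 q" by auto
  qed
  have w: "\<And>p. v p = pCons 0 (w p)" unfolding w_def using ex by (metis (mono_tags) someI_ex)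
  have "w \<in> Cmod r" unfolding Cmod_def
  proof (intro CollectI allI impI)
    fix p assume "r \<le> p"
    then have "v p = 0" using v unfolding Cmod_def by auto
    then show "w p = 0" using w[of p] by simp
  qed
  moreover have "v = Uop w"
    unfolding Uop_def psmul_def by (rule ext) (simp add: w)
  ultimately show ?thesis by blast
qed

lemma rho_dmap_eq:
  assumes "v \<in> Cmod r" "w \<in> Cmod r" "rho v = rho w"
  shows "rho (dmap r M v) = rho (dmap r M w)"
proof -
  have "rho (v + w) = 0" using assms by (simp add: rho_add bitfun_add_self)
  then obtain u where u: "u \<in> Cmod r" "v + w = Uop u" using rho0_Uop[of "v + w" r] assms Cmod_add by blast
  have "dmap r M v + dmap r M w = Uop (dmap r M u)"
    using u by (simp add: dmap_add[symmetric] Uop_def dmap_psmul)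
  then have "rho (dmap r M v) + rho (dmap r M w) = 0" by (simp add: rho_add[symmetric] rho_Uop)
  then have "rho (dmap r M v) + rho (dmap r M w) + rho (dmap r M w) = rho (dmap r M w)" by simp
  then show ?thesis by (simp add: add.assoc bitfun_add_self)
qed

lemma dmap_lincomb: "dmap r M (lincomb r c y) = (\<Sum>q<r. psmul (c q) (dmap r M (y q)))"
  unfolding lincomb_def by (simp add: dmap_sum dmap_psmul)

lemma rho_lincomb: "rho (lincomb r c y) = (\<Sum>q<r. (\<lambda>x. poly.coeff (c q) 0 * rho (y q) x))"
  unfolding lincomb_def by (simp add: rho_sum rho_psmul)

lemma split_odd_even:
  fixes f :: "nat \<Rightarrow> 'a::comm_monoid_add" and m :: nat
  shows "(\<Sum>q<2*m+1. f q) = (\<Sum>j\<in>{1..m}. f (2*j-1)) + (\<Sum>i\<in>{..m}. f (2*i))"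
proof -
  have eq: "{..<2*m+1} = (\<lambda>j. 2*j-1) ` {1..m} \<union> (\<lambda>i. 2*i) ` {..m}"
  proof
    show "{..<2*m+1} \<subseteq> (\<lambda>j. 2*j-1) ` {1..m} \<union> (\<lambda>i. 2*i) ` {..m}"
    proof
      fix q assume q: "q \<in> {..<2*m+1}"
      show "q \<in> (\<lambda>j. 2*j-1) ` {1..m} \<union> (\<lambda>i. 2*i) ` {..m}"
      proof (cases "even q")
        case True then obtain i where "q = 2*i" by (rule evenE)
        then show ?thesis using q by auto
      next
        case False then obtain i where "q = 2*i+1" by (rule oddE)
        then have "q = 2*(i+1) - 1" "i + 1 \<in> {1..m}" using q by auto
        then show ?thesis by blast
      qed
    qed
  qed auto
  have d: "(\<lambda>j. 2*j-1) ` {1..m} \<inter> (\<lambda>i. 2*i) ` {..m} = {}"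
  proof (rule equals0I)
    fix x assume "x \<in> (\<lambda>j. 2*j-1) ` {1..m} \<inter> (\<lambda>i. 2*i) ` {..m}"
    then have x: "x \<in> (\<lambda>j. 2*j-1) ` {1..m}" "x \<in> (\<lambda>i. 2*i) ` {..m}" by auto
    from x(1) obtain j where j: "x = 2*j-1" "j \<ge> 1" by auto
    from x(2) obtain i where i: "x = 2*i" by auto
    from i j show False by presburger
  qed
  have i1: "inj_on (\<lambda>j. 2*j-1) {1..m}" by (rule inj_onI) auto
  have i2: "inj_on (\<lambda>i::nat. 2*i) {..m}" by (rule inj_onI) auto
  have "(\<Sum>q\<in>(\<lambda>j. 2*j-1) ` {1..m} \<union> (\<lambda>i. 2*i) ` {..m}. f q)
     = (\<Sum>q\<in>(\<lambda>j. 2*j-1) ` {1..m}. f q) + (\<Sum>q\<in>(\<lambda>i. 2*i) ` {..m}. f q)"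
    by (rule sum.union_disjoint[OF _ _ d]) auto
  also have "\<dots> = (\<Sum>j\<in>{1..m}. f (2*j-1)) + (\<Sum>i\<in>{..m}. f (2*i))"
    using sum.reindex[OF i1, of f] sum.reindex[OF i2, of f] by (simp only: comp_def)
  finally show ?thesis unfolding eq .
qed

declare add_bit_eq_xor[simp del] mult_bit_eq_and[simp del]

lemma fsum_scal: "(\<Sum>p\<in>X. (\<lambda>x. e p * (g x :: bit))) = (\<lambda>x. (\<Sum>p\<in>X. e p) * g x)"
  by (rule ext) (simp add: sum_fun_apply sum_distrib_right)

lemma grsum_union: "finite A \<Longrightarrow> finite B \<Longrightarrow> A \<inter> B = {} \<Longrightarrow> grsum y (A \<union> B) = grsum y A + grsum y B"
  unfolding grsum_def by (rule sum.union_disjoint)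

lemma grsum_symdiff:
  assumes "finite A" "finite B"
  shows "grsum y A + grsum y B = grsum y ((A - B) \<union> (B - A))"
proof -
  have a: "grsum y A = grsum y (A - B) + grsum y (A \<inter> B)"
  proof -
    have "A = (A - B) \<union> (A \<inter> B)" by blast
    moreover have "(A - B) \<inter> (A \<inter> B) = {}" by blast
    ultimately show ?thesis using assms grsum_union[of "A - B" "A \<inter> B" y] by (metis finite_Diff finite_Int)
  qed
  have b: "grsum y B = grsum y (B - A) + grsum y (A \<inter> B)"
  proof -
    have "B = (B - A) \<union> (A \<inter> B)" by blast
    moreover have "(B - A) \<inter> (A \<inter> B) = {}" by blast
    ultimately show ?thesis using assms grsum_union[of "B - A" "A \<inter> B" y] by (metis finite_Diff finite_Int)
  qed
  have c: "grsum y ((A - B) \<union> (B - A)) = grsum y (A - B) + grsum y (B - A)"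
    using assms by (intro grsum_union) auto
  show ?thesis unfolding a b c
    by (metis (no_types, lifting) add.assoc add.commute add.right_neutral cvec_add_self)
qed

context
  fixes m :: nat and r :: nat and gr :: "nat \<Rightarrow> int" and M :: "nat \<Rightarrow> nat \<Rightarrow> bit poly"
    and xi eta :: "nat \<Rightarrow> cvec" and A B :: "nat \<Rightarrow> nat \<Rightarrow> bit poly"
  assumes r: "r = 2*m+1"
    and vs: "vert_simplified r gr M m xi"
    and hs: "horiz_simplified r gr M m eta"
    and comp: "bases_compatible r gr xi eta A B"
begin

lemma xi_Cmod: "q < r \<Longrightarrow> xi q \<in> Cmod r"
  using vs unfolding vert_simplified_def filtered_basis_def FUbasis_def by blast
lemma eta_Cmod: "q < r \<Longrightarrow> eta q \<in> Cmod r"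
  using hs unfolding horiz_simplified_def filtered_basis_def FUbasis_def by blast

lemma etav_coeff: "q < r \<Longrightarrow> etav m B p q = poly.coeff (B p q) 0"
  unfolding etav_def r by (simp add: poly_0_coeff_0)

lemma homog:
  assumes p: "p < r" and q: "q < r" and e: "etav m B p q \<noteq> 0"
  shows "Alex r gr (xi q) = Alex r gr (eta p)"
proof -
  have c: "poly.coeff (B p q) 0 \<noteq> 0" using e etav_coeff[OF q] by simp
  then have "B p q \<noteq> 0" by auto
  then have "Alex r gr (psmul (B p q) (xi q)) = Alex r gr (eta p)"
    using comp p q unfolding bases_compatible_def by blast
  then show ?thesis using Alex_psmul[OF c xi_Cmod[OF q]] by simp
qed

lemma eta_lincomb: "p < r \<Longrightarrow> eta p = lincomb r (B p) xi"
  using comp unfolding bases_compatible_def by blast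

lemma rho_eta: "p < r \<Longrightarrow> rho (eta p) = (\<Sum>q<r. (\<lambda>x. etav m B p q * rho (xi q) x))"
  by (simp add: eta_lincomb rho_lincomb etav_coeff)

lemma rho_dmap_xi_odd: "j \<in> {1..m} \<Longrightarrow> rho (dmap r M (xi (2*j-1))) = rho (xi (2*j))"
  using vs unfolding vert_simplified_def by (blast intro: rho_diff_UC)

lemma rho_dmap_xi_even: "i \<le> m \<Longrightarrow> rho (dmap r M (xi (2*i))) = 0"
  using vs unfolding vert_simplified_def by (blast intro: rho_UC)

lemma rho_dmap_eta: "p < r \<Longrightarrow>
   rho (dmap r M (eta p)) = (\<Sum>j\<in>{1..m}. (\<lambda>x. etav m B p (2*j-1) * rho (xi (2*j)) x))"
proof -
  assume p: "p < r"
  have "rho (dmap r M (eta p)) = (\<Sum>q<2*m+1. (\<lambda>x. poly.coeff (B p q) 0 * rho (dmap r M (xi q)) x))"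
    by (simp only: eta_lincomb[OF p] dmap_lincomb rho_sum rho_psmul r)
  also have "\<dots> = (\<Sum>j\<in>{1..m}. (\<lambda>x. poly.coeff (B p (2*j-1)) 0 * rho (dmap r M (xi (2*j-1))) x))
      + (\<Sum>i\<in>{..m}. (\<lambda>x. poly.coeff (B p (2*i)) 0 * rho (dmap r M (xi (2*i))) x))"
    by (rule split_odd_even)
  also have "(\<Sum>i\<in>{..m}. (\<lambda>x. poly.coeff (B p (2*i)) 0 * rho (dmap r M (xi (2*i))) x)) = 0"
    by (rule sum.neutral) (simp add: rho_dmap_xi_even zero_fun_def)
  also have "(\<Sum>j\<in>{1..m}. (\<lambda>x. poly.coeff (B p (2*j-1)) 0 * rho (dmap r M (xi (2*j-1))) x))
      = (\<Sum>j\<in>{1..m}. (\<lambda>x. etav m B p (2*j-1) * rho (xi (2*j)) x))"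
  proof (rule sum.cong)
    fix j assume j: "j \<in> {1..m}"
    then have lt: "2*j-1 < r" using r by auto
    show "(\<lambda>x. poly.coeff (B p (2*j-1)) 0 * rho (dmap r M (xi (2*j-1))) x)
        = (\<lambda>x. etav m B p (2*j-1) * rho (xi (2*j)) x)"
      by (simp only: rho_dmap_xi_odd[OF j] etav_coeff[OF lt])
  qed simp
  finally show ?thesis by simp
qed

end

declare add_bit_eq_xor[simp del] mult_bit_eq_and[simp del]

lemma grsum_alt: "grsum y T = (\<Sum>z\<in>T. psmul (monom 1 (snd z)) (y (fst z)))"
  unfolding grsum_def by (simp add: case_prod_beta)

lemma fb_indep: "filtered_basis r gr y \<Longrightarrow> T \<subseteq> grpiece r gr y i \<Longrightarrow> finite T \<Longrightarrow> T \<noteq> {}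
   \<Longrightarrow> grsum y T \<notin> Filt r gr (i - 1)"
  unfolding filtered_basis_def by blast

lemma fb_decomp: "filtered_basis r gr y \<Longrightarrow> v \<in> Filt r gr i \<Longrightarrow>
   \<exists>T. T \<subseteq> grpiece r gr y i \<and> finite T \<and> v + grsum y T \<in> Filt r gr (i - 1)"
  unfolding filtered_basis_def by (metis cvec_minus)

lemma Filt_add_cancel: "u + v \<in> Filt r gr i \<Longrightarrow> v \<in> Filt r gr i \<Longrightarrow> u \<in> Filt r gr i"
proof -
  assume "u + v \<in> Filt r gr i" "v \<in> Filt r gr i"
  then have "(u + v) + v \<in> Filt r gr i" by (rule Filt_add)
  then show ?thesis by (simp add: add.assoc cvec_add_self)
qed

context
  fixes m :: nat and r :: nat and gr :: "nat \<Rightarrow> int" and M :: "nat \<Rightarrow> nat \<Rightarrow> bit poly"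
    and xi eta :: "nat \<Rightarrow> cvec" and A B :: "nat \<Rightarrow> nat \<Rightarrow> bit poly"
  assumes r: "r = 2*m+1"
    and vs: "vert_simplified r gr M m xi"
    and hs: "horiz_simplified r gr M m eta"
    and comp: "bases_compatible r gr xi eta A B"
begin

lemmas homog' = homog[OF r vs hs comp]
lemmas xi_Cmod' = xi_Cmod[OF r vs hs comp]
lemmas eta_Cmod' = eta_Cmod[OF r vs hs comp]
lemmas rho_eta' = rho_eta[OF r vs hs comp]
lemmas rho_dmap_eta' = rho_dmap_eta[OF r vs hs comp]

lemma fbeta: "filtered_basis r gr eta" using hs unfolding horiz_simplified_def by blast

lemma core:
  fixes a :: "nat \<Rightarrow> bit" and k :: int and P :: "nat set" and \<delta> :: "nat \<Rightarrow> bit"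
  assumes cx: "filtered_complex r gr M"
    and asupp: "\<And>q. a q \<noteq> 0 \<Longrightarrow> (\<exists>j\<in>{1..m}. q = 2*j) \<and> Alex r gr (xi q) = k"
    and Psub: "P \<subseteq> {1..m}" and Pne: "P \<noteq> {}"
    and PA: "\<And>p. p \<in> P \<Longrightarrow> Alex r gr (eta (2*p-1)) = k"
    and aP: "\<And>q. a q = (\<Sum>p\<in>P. etav m B (2*p-1) q)"
    and dl: "\<And>j. j \<in> {1..m} \<Longrightarrow>
       (hV r gr xi j = 1 \<longrightarrow> (\<Sum>p\<in>Eset m. \<delta> p * etav m B p (2*j-1)) = a (2*j)) \<and>
       (hV r gr xi j \<noteq> 1 \<longrightarrow> a (2*j) = 0 \<and> (\<Sum>p\<in>Eset m. \<delta> p * etav m B p (2*j-1)) = 0)"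
  shows False
proof -
  define Q where "Q = {p \<in> Eset m. \<delta> p = 1 \<and> Alex r gr (eta p) = k + 1}"
  have finQ: "finite Q" unfolding Q_def using finite_Eset by simp
  have Qr: "\<And>p. p \<in> Q \<Longrightarrow> p < r" unfolding Q_def Eset_def r by auto
  define ct where "ct = (\<Sum>p\<in>Q. eta p)"
  define x where "x = dmap r M ct"
  have x_eq: "x = (\<Sum>p\<in>Q. dmap r M (eta p))" unfolding x_def ct_def by (rule dmap_sum)
  have ctC: "ct \<in> Cmod r" unfolding ct_def by (rule Cmod_sum) (simp add: eta_Cmod' Qr)
  have xC: "x \<in> Cmod r" unfolding x_def by (rule Cmod_dmap)
  have xF: "x \<in> Filt r gr k" unfolding x_eq
  proof (rule Filt_sum)
    fix p assume p: "p \<in> Q"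
    then obtain i where i: "p = 2*i" "i \<le> m" unfolding Q_def Eset_def by (auto elim!: evenE)
    have "dmap r M (eta (2*i)) \<in> Filt r gr (Alex r gr (eta (2*i)) - 1)"
      using hs i(2) unfolding horiz_simplified_def by blast
    moreover have "Alex r gr (eta (2*i)) = k + 1" using p i unfolding Q_def by simp
    ultimately show "dmap r M (eta p) \<in> Filt r gr k" using i by simp
  qed
  define av where "av = (\<Sum>p\<in>P. eta (2*p-1))"
  have Pr: "\<And>p. p \<in> P \<Longrightarrow> 2*p-1 < r" using Psub r by force
  have avC: "av \<in> Cmod r" unfolding av_def by (rule Cmod_sum) (blast intro: eta_Cmod' Pr)
  have avF: "av \<in> Filt r gr k" unfolding av_def
  proof (rule Filt_sum)
    fix p assume p: "p \<in> P"
    show "eta (2*p-1) \<in> Filt r gr k"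
      using Alex_in_Filt[OF eta_Cmod'[OF Pr[OF p]], of gr] PA[OF p] by simp
  qed
  have gamma: "\<And>j. j \<in> {1..m} \<Longrightarrow> (\<Sum>p\<in>Q. etav m B p (2*j-1)) = a (2*j)"
  proof -
    fix j assume j: "j \<in> {1..m}"
    have j1: "2*j-1 < r" using j r by force
    have Er: "\<And>p. p \<in> Eset m \<Longrightarrow> p < r" unfolding Eset_def r by auto
    have sq: "(\<Sum>p\<in>Q. etav m B p (2*j-1)) = (\<Sum>p\<in>Eset m. if \<delta> p = 1 \<and> Alex r gr (eta p) = k + 1 then etav m B p (2*j-1) else 0)"
      unfolding Q_def by (rule sum.inter_filter[OF finite_Eset])
    show "(\<Sum>p\<in>Q. etav m B p (2*j-1)) = a (2*j)"
    proof (cases "Alex r gr (xi (2*j-1)) = k + 1")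
      case True
      have "(\<Sum>p\<in>Eset m. if \<delta> p = 1 \<and> Alex r gr (eta p) = k + 1 then etav m B p (2*j-1) else 0)
          = (\<Sum>p\<in>Eset m. \<delta> p * etav m B p (2*j-1))"
      proof (rule sum.cong)
        fix p assume p: "p \<in> Eset m"
        show "(if \<delta> p = 1 \<and> Alex r gr (eta p) = k + 1 then etav m B p (2*j-1) else 0) = \<delta> p * etav m B p (2*j-1)"
        proof (cases "etav m B p (2*j-1) = 0")
          case True then show ?thesis by simp
        next
          case False
          then have "Alex r gr (eta p) = k + 1" using homog'[OF Er[OF p] j1] \<open>Alex r gr (xi (2*j-1)) = k + 1\<close> by simp
          then show ?thesis by (cases "\<delta> p") auto
        qed
      qed simp
      then show ?thesis using sq dl[OF j] by metis
    next
      case False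
      have "(\<Sum>p\<in>Eset m. if \<delta> p = 1 \<and> Alex r gr (eta p) = k + 1 then etav m B p (2*j-1) else 0) = 0"
      proof (rule sum.neutral, rule ballI)
        fix p assume p: "p \<in> Eset m"
        show "(if \<delta> p = 1 \<and> Alex r gr (eta p) = k + 1 then etav m B p (2*j-1) else 0) = 0"
        proof (cases "etav m B p (2*j-1) = 0")
          case True then show ?thesis by simp
        next
          case False
          then have "Alex r gr (eta p) \<noteq> k + 1" using homog'[OF Er[OF p] j1] \<open>Alex r gr (xi (2*j-1)) \<noteq> k + 1\<close> by simp
          then show ?thesis by simp
        qed
      qed
      moreover have "a (2*j) = 0"
      proof (rule ccontr)
        assume a2: "a (2*j) \<noteq> 0"
        then have ak: "Alex r gr (xi (2*j)) = k" using asupp by blast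
        have "hV r gr xi j = 1" using dl[OF j] a2 by blast
        moreover have "Alex r gr (xi (2*j - 1)) - Alex r gr (xi (2*j)) > 0"
          using vs j unfolding vert_simplified_def by blast
        ultimately have "Alex r gr (xi (2*j-1)) = k + 1" using ak unfolding hV_def by linarith
        then show False using False by simp
      qed
      ultimately show ?thesis using sq by simp
    qed
  qed
  have rho_x: "rho x = (\<Sum>j\<in>{1..m}. (\<lambda>y. a (2*j) * rho (xi (2*j)) y))"
  proof -
    have "rho x = (\<Sum>p\<in>Q. rho (dmap r M (eta p)))" unfolding x_eq by (rule rho_sum)
    also have "\<dots> = (\<Sum>p\<in>Q. \<Sum>j\<in>{1..m}. (\<lambda>y. etav m B p (2*j-1) * rho (xi (2*j)) y))"
      by (rule sum.cong) (simp_all add: rho_dmap_eta' Qr)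
    also have "\<dots> = (\<Sum>j\<in>{1..m}. \<Sum>p\<in>Q. (\<lambda>y. etav m B p (2*j-1) * rho (xi (2*j)) y))"
      by (rule sum.swap)
    also have "\<dots> = (\<Sum>j\<in>{1..m}. (\<lambda>y. (\<Sum>p\<in>Q. etav m B p (2*j-1)) * rho (xi (2*j)) y))"
      by (simp only: fsum_scal)
    also have "\<dots> = (\<Sum>j\<in>{1..m}. (\<lambda>y. a (2*j) * rho (xi (2*j)) y))"
      by (rule sum.cong) (simp_all only: gamma)
    finally show ?thesis .
  qed
  have rho_av: "rho av = (\<Sum>j\<in>{1..m}. (\<lambda>y. a (2*j) * rho (xi (2*j)) y))"
  proof -
    have "rho av = (\<Sum>p\<in>P. rho (eta (2*p-1)))" unfolding av_def by (rule rho_sum)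
    also have "\<dots> = (\<Sum>p\<in>P. \<Sum>q<r. (\<lambda>y. etav m B (2*p-1) q * rho (xi q) y))"
      by (rule sum.cong) (simp_all only: rho_eta'[OF Pr])
    also have "\<dots> = (\<Sum>q<r. \<Sum>p\<in>P. (\<lambda>y. etav m B (2*p-1) q * rho (xi q) y))"
      by (rule sum.swap)
    also have "\<dots> = (\<Sum>q<r. (\<lambda>y. a q * rho (xi q) y))"
      by (simp only: fsum_scal aP)
    also have "\<dots> = (\<Sum>j\<in>{1..m}. (\<lambda>y. a (2*j-1) * rho (xi (2*j-1)) y))
        + (\<Sum>i\<in>{..m}. (\<lambda>y. a (2*i) * rho (xi (2*i)) y))"
      unfolding r by (rule split_odd_even)
    also have "(\<Sum>j\<in>{1..m}. (\<lambda>y. a (2*j-1) * rho (xi (2*j-1)) y)) = 0"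
    proof (rule sum.neutral, rule ballI)
      fix j assume j: "j \<in> {1..m}"
      have "a (2*j-1) = 0"
      proof (rule ccontr)
        assume "a (2*j-1) \<noteq> 0"
        then obtain i :: nat where "2*j-1 = 2*i" "i \<ge> 1" using asupp by force
        then show False using j by presburger
      qed
      then show "(\<lambda>y. a (2*j-1) * rho (xi (2*j-1)) y) = 0" by (simp add: zero_fun_def)
    qed
    also have "(\<Sum>i\<in>{..m}. (\<lambda>y. a (2*i) * rho (xi (2*i)) y)) = (\<Sum>i\<in>{1..m}. (\<lambda>y. a (2*i) * rho (xi (2*i)) y))"
    proof (rule sum.mono_neutral_right)
      show "\<forall>i\<in>{..m} - {1..m}. (\<lambda>y. a (2*i) * rho (xi (2*i)) y) = 0"
      proof
        fix i assume "i \<in> {..m} - {1..m}"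
        then have i0: "i = 0" by auto
        have "a 0 = 0"
        proof (rule ccontr)
          assume "a 0 \<noteq> 0"
          then obtain j :: nat where "0 = 2*j" "j \<ge> 1" using asupp by force
          then show False by simp
        qed
        then show "(\<lambda>y. a (2*i) * rho (xi (2*i)) y) = 0" using i0 by (simp add: zero_fun_def)
      qed
    qed auto
    finally show ?thesis by simp
  qed
  have "rho (x + av) = 0" by (simp add: rho_add rho_x rho_av bitfun_add_self)
  then obtain w where wC: "w \<in> Cmod r" and xw: "x + av = Uop w"
    using rho0_Uop[of "x + av" r] Cmod_add[OF xC avC] by blast
  have UwF: "Uop w \<in> Filt r gr k" using xw Filt_add[OF xF avF] by simp
  have wF: "w \<in> Filt r gr (k + 1)" by (rule Filt_Uop[OF wC UwF])
  obtain T1 where T1: "T1 \<subseteq> grpiece r gr eta (k+1)" "finite T1" "w + grsum eta T1 \<in> Filt r gr k"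
    using fb_decomp[OF fbeta wF] by auto
  define T1' where "T1' = (\<lambda>z. (fst z, Suc (snd z))) ` T1"
  have T1'sub: "T1' \<subseteq> grpiece r gr eta k"
  proof
    fix z assume "z \<in> T1'"
    then obtain q s where qs: "(q, s) \<in> T1" "z = (q, Suc s)" unfolding T1'_def by auto
    then have "q < r" "Alex r gr (eta q) - int s = k + 1" using T1(1) unfolding grpiece_def by auto
    then show "z \<in> grpiece r gr eta k" using qs(2) unfolding grpiece_def by auto
  qed
  have finT1': "finite T1'" unfolding T1'_def using T1(2) by simp
  have injS: "inj_on (\<lambda>z. (fst z, Suc (snd z))) T1" by (rule inj_onI) (auto simp: prod_eq_iff)
  have UT1: "psmul (monom 1 1) (grsum eta T1) = grsum eta T1'"
  proof -
    have "psmul (monom 1 1) (grsum eta T1) = (\<Sum>z\<in>T1. psmul (monom 1 (Suc (snd z))) (eta (fst z)))"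
      unfolding grsum_alt psmul_sum psmul_psmul monom_mult_monom by simp
    also have "\<dots> = grsum eta T1'"
      unfolding grsum_alt T1'_def sum.reindex[OF injS] by (simp add: comp_def)
    finally show ?thesis .
  qed
  have G1: "Uop w + grsum eta T1' \<in> Filt r gr (k - 1)"
  proof -
    have "psmul (monom 1 1) (w + grsum eta T1) \<in> Filt r gr (k - int 1)"
      by (rule Filt_monom[OF T1(3)])
    then show ?thesis unfolding psmul_add UT1 Uop_monom by simp
  qed
  obtain T where T: "T \<subseteq> grpiece r gr eta k" "finite T" "x + grsum eta T \<in> Filt r gr (k - 1)"
    using fb_decomp[OF fbeta xF] by auto
  have Teven: "\<And>z. z \<in> T \<Longrightarrow> even (fst z)"
  proof -
    have dx0: "dmap r M x = 0" using cx ctC unfolding filtered_complex_def x_def by blast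
    have "dmap r M (x + grsum eta T) \<in> Filt r gr (k - 1)" using cx T(3) unfolding filtered_complex_def by blast
    then have dT: "dmap r M (grsum eta T) \<in> Filt r gr (k - 1)" by (simp add: dmap_add dx0)
    define l where "l = (\<lambda>q. lH r gr eta ((q+1) div 2))"
    define To where "To = {z \<in> T. odd (fst z)}"
    define \<phi> where "\<phi> = (\<lambda>z::nat\<times>nat. (fst z + 1, snd z + l (fst z)))"
    define tm where "tm = (\<lambda>z::nat\<times>nat. psmul (monom 1 (snd z)) (dmap r M (eta (fst z)))
       + (if odd (fst z) then psmul (monom 1 (snd z + l (fst z))) (eta (fst z + 1)) else 0))"
    have oddj: "\<And>q. odd q \<Longrightarrow> q < r \<Longrightarrow> \<exists>j. q = 2*j - 1 \<and> j \<in> {1..m} \<and> (q+1) div 2 = j"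
    proof -
      fix q :: nat assume q: "odd q" "q < r"
      from q(1) obtain i where i: "q = 2*i+1" by (rule oddE)
      then show "\<exists>j. q = 2*j - 1 \<and> j \<in> {1..m} \<and> (q+1) div 2 = j"
        using q(2) r by (intro exI[of _ "i+1"]) auto
    qed
    have lpos: "\<And>j. j \<in> {1..m} \<Longrightarrow> int (lH r gr eta j) = Alex r gr (eta (2*j)) - Alex r gr (eta (2*j-1))"
    proof -
      fix j assume j: "j \<in> {1..m}"
      have "Alex r gr (eta (2*j)) - Alex r gr (eta (2*j - 1)) > 0"
        using hs j unfolding horiz_simplified_def by blast
      then show "int (lH r gr eta j) = Alex r gr (eta (2*j)) - Alex r gr (eta (2*j-1))"
        unfolding lH_def by simp
    qed
    have tmF: "\<And>z. z \<in> T \<Longrightarrow> tm z \<in> Filt r gr (k - 1)"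
    proof -
      fix z assume zT: "z \<in> T"
      obtain q s where z: "z = (q,s)" by force
      have qr: "q < r" and qk: "Alex r gr (eta q) - int s = k" using zT T(1) z unfolding grpiece_def by auto
      show "tm z \<in> Filt r gr (k - 1)"
      proof (cases "odd q")
        case False
        then obtain i where i: "q = 2*i" by (auto elim!: evenE)
        have "i \<le> m" using qr r i by auto
        then have "dmap r M (eta (2*i)) \<in> Filt r gr (Alex r gr (eta (2*i)) - 1)"
          using hs unfolding horiz_simplified_def by blast
        then have "psmul (monom 1 s) (dmap r M (eta q)) \<in> Filt r gr (Alex r gr (eta q) - 1 - int s)"
          using i by (simp add: Filt_monom)
        moreover have "Alex r gr (eta q) - 1 - int s = k - 1" using qk by simp
        ultimately show ?thesis using False z unfolding tm_def by simp
      next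
        case True
        then obtain j where j: "q = 2*j - 1" "j \<in> {1..m}" "(q+1) div 2 = j" using oddj qr by blast
        have q1: "q + 1 = 2*j" using j by auto
        have "dmap r M (eta (2*j-1)) - psmul (monom 1 (lH r gr eta j)) (eta (2*j))
                   \<in> Filt r gr (Alex r gr (eta (2*j-1)) - 1)"
          using hs j(2) unfolding horiz_simplified_def by blast
        then have "dmap r M (eta q) + psmul (monom 1 (l q)) (eta (q + 1)) \<in> Filt r gr (Alex r gr (eta q) - 1)"
          unfolding l_def j(3) q1 using j(1) by (simp add: cvec_minus)
        then have "psmul (monom 1 s) (dmap r M (eta q) + psmul (monom 1 (l q)) (eta (q + 1))) \<in> Filt r gr (Alex r gr (eta q) - 1 - int s)"
          by (rule Filt_monom)
        moreover have "Alex r gr (eta q) - 1 - int s = k - 1" using qk by simp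
        ultimately show ?thesis using True z unfolding tm_def
          by (simp add: psmul_add psmul_psmul monom_mult_monom)
      qed
    qed
    have inj\<phi>: "inj_on \<phi> To"
    proof (rule inj_onI)
      fix z1 z2 assume "\<phi> z1 = \<phi> z2"
      then have "fst z1 = fst z2" "snd z1 + l (fst z1) = snd z2 + l (fst z2)" unfolding \<phi>_def by auto
      then show "z1 = z2" by (simp add: prod_eq_iff)
    qed
    have finTo: "finite To" unfolding To_def using T(2) by simp
    have sumtm: "(\<Sum>z\<in>T. tm z) = dmap r M (grsum eta T) + grsum eta (\<phi> ` To)"
    proof -
      have "(\<Sum>z\<in>T. tm z) = (\<Sum>z\<in>T. psmul (monom 1 (snd z)) (dmap r M (eta (fst z))))
          + (\<Sum>z\<in>T. if odd (fst z) then psmul (monom 1 (snd z + l (fst z))) (eta (fst z + 1)) else 0)"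
        unfolding tm_def by (rule sum.distrib)
      also have "(\<Sum>z\<in>T. psmul (monom 1 (snd z)) (dmap r M (eta (fst z)))) = dmap r M (grsum eta T)"
        unfolding grsum_alt dmap_sum dmap_psmul ..
      also have "(\<Sum>z\<in>T. if odd (fst z) then psmul (monom 1 (snd z + l (fst z))) (eta (fst z + 1)) else 0)
          = (\<Sum>z\<in>To. psmul (monom 1 (snd z + l (fst z))) (eta (fst z + 1)))"
        unfolding To_def by (rule sum.inter_filter[OF T(2), symmetric])
      also have "\<dots> = grsum eta (\<phi> ` To)"
        unfolding grsum_alt sum.reindex[OF inj\<phi>] by (simp add: \<phi>_def comp_def)
      finally show ?thesis .
    qed
    have "(\<Sum>z\<in>T. tm z) \<in> Filt r gr (k - 1)" by (rule Filt_sum) (rule tmF)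
    then have "grsum eta (\<phi> ` To) + dmap r M (grsum eta T) \<in> Filt r gr (k - 1)"
      unfolding sumtm by (simp add: add.commute)
    then have gF: "grsum eta (\<phi> ` To) \<in> Filt r gr (k - 1)" using dT by (rule Filt_add_cancel)
    have \<phi>sub: "\<phi> ` To \<subseteq> grpiece r gr eta k"
    proof
      fix z' assume "z' \<in> \<phi> ` To"
      then obtain q s where qs: "(q,s) \<in> T" "odd q" "z' = \<phi> (q,s)" unfolding To_def by force
      have qr: "q < r" and qk: "Alex r gr (eta q) - int s = k" using qs T(1) unfolding grpiece_def by auto
      obtain j where j: "q = 2*j - 1" "j \<in> {1..m}" "(q+1) div 2 = j" using oddj qs(2) qr by blast
      have q1: "q + 1 = 2*j" using j by auto
      have "q + 1 < r" using q1 j(2) r by auto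
      moreover have "Alex r gr (eta (q+1)) - int (s + l q) = k"
        using lpos[OF j(2)] qk unfolding l_def j(3) q1 using j(1) by simp
      ultimately show "z' \<in> grpiece r gr eta k" using qs(3) unfolding \<phi>_def grpiece_def by simp
    qed
    have "\<phi> ` To = {}" using fb_indep[OF fbeta \<phi>sub] finTo gF by blast
    then have "To = {}" by simp
    then show "\<And>z. z \<in> T \<Longrightarrow> even (fst z)" unfolding To_def by blast
  qed
  define Ta where "Ta = (\<lambda>p. (2*p-1, 0::nat)) ` P"
  have finP: "finite P" using Psub finite_subset by blast
  have injTa: "inj_on (\<lambda>p. (2*p-1, 0::nat)) P"
  proof (rule inj_onI)
    fix p q assume "p \<in> P" "q \<in> P" "(2*p-1, 0::nat) = (2*q-1, 0)"
    then show "p = q" using Psub by force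
  qed
  have av_Ta: "av = grsum eta Ta"
    unfolding grsum_alt Ta_def sum.reindex[OF injTa] av_def by (simp add: comp_def psmul_monom0 psmul_one)
  have Tasub: "Ta \<subseteq> grpiece r gr eta k" unfolding Ta_def grpiece_def using Pr PA by auto
  have finTa: "finite Ta" unfolding Ta_def using finP by simp
  have Tane: "Ta \<noteq> {}" unfolding Ta_def using Pne by simp
  have sum3: "(x + grsum eta T) + (Uop w + grsum eta T1') = av + (grsum eta T + grsum eta T1')"
  proof -
    have "(x + grsum eta T) + ((x + av) + grsum eta T1') = (x + x) + (av + (grsum eta T + grsum eta T1'))"
      by (simp add: ac_simps)
    then show ?thesis using xw by (simp add: cvec_add_self)
  qed
  define U0 where "U0 = Ta \<union> ((T - T1') \<union> (T1' - T))"
  have disj: "Ta \<inter> ((T - T1') \<union> (T1' - T)) = {}"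
  proof (rule equals0I)
    fix z assume z: "z \<in> Ta \<inter> ((T - T1') \<union> (T1' - T))"
    then obtain p where p: "p \<in> P" "z = (2*p-1, 0)" unfolding Ta_def by auto
    have "odd (2*p-1)" using p(1) Psub by force
    then have "z \<notin> T" using Teven p(2) by force
    moreover have "z \<notin> T1'" using p(2) unfolding T1'_def by auto
    ultimately show False using z by blast
  qed
  have "av + (grsum eta T + grsum eta T1') = grsum eta U0"
    unfolding av_Ta U0_def grsum_symdiff[OF T(2) finT1']
    by (rule grsum_union[symmetric]) (use finTa T(2) finT1' disj in auto)
  moreover have "(x + grsum eta T) + (Uop w + grsum eta T1') \<in> Filt r gr (k - 1)"
    using Filt_add[OF T(3) G1] .
  ultimately have "grsum eta U0 \<in> Filt r gr (k - 1)" using sum3 by simp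
  moreover have "U0 \<subseteq> grpiece r gr eta k" unfolding U0_def using Tasub T(1) T1'sub by auto
  moreover have "finite U0" unfolding U0_def using finTa T(2) finT1' by auto
  moreover have "U0 \<noteq> {}" unfolding U0_def using Tane by auto
  ultimately show False using fb_indep[OF fbeta] by blast
qed
end

declare add_bit_eq_xor[simp del] mult_bit_eq_and[simp del]

lemma F2span_supp:
  assumes x: "x \<in> F2span S" and S: "\<And>y q. y \<in> S \<Longrightarrow> y q \<noteq> 0 \<Longrightarrow> R q" and xq: "x q \<noteq> 0"
  shows "R q"
proof -
  obtain T where T: "T \<subseteq> S" "finite T" "x = (\<Sum>y\<in>T. y)" using x unfolding F2span_def by blast
  have "(\<Sum>y\<in>T. y q) \<noteq> 0" using xq T(3) by (simp add: sum_fun_apply)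
  then obtain y where "y \<in> T" "y q \<noteq> 0" by (meson sum.neutral)
  then show ?thesis using S T(1) by blast
qed

lemma Dx_Espan:
  assumes "\<And>g. (\<lambda>q. Dg g (Xi q)) \<in> Espan m B"
  shows "(\<lambda>q. linext (gens m h l t L) Dg b (Xi q)) \<in> Espan m B"
proof -
  have "(\<lambda>q. \<Sum>g\<in>gens m h l t L. (\<lambda>q. b g * Dg g (Xi q)) q) \<in> Espan m B"
    by (rule Espan_sum[OF finite_gens]) (rule Espan_smult[OF assms])
  then show ?thesis by (simp add: linext_apply)
qed

lemma eqn_dl:
  assumes c: "c \<in> Espan m B"
    and eq: "D1 m h l t L v = D123 m h l t L (iota0 a)"
    and cv: "\<And>q. v (Xi q) = c q"
  shows "\<exists>\<delta>. \<forall>j\<in>{1..m}.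
       (h j = 1 \<longrightarrow> (\<Sum>p\<in>Eset m. \<delta> p * etav m B p (2*j-1)) = a (2*j)) \<and>
       (h j \<noteq> 1 \<longrightarrow> a (2*j) = 0 \<and> (\<Sum>p\<in>Eset m. \<delta> p * etav m B p (2*j-1)) = 0)"
proof -
  obtain \<delta> where d: "\<And>q. c q = (\<Sum>p\<in>Eset m. \<delta> p * etav m B p q)" using c unfolding Espan_def by blast
  show ?thesis
  proof (intro exI[of _ \<delta>] ballI conjI impI)
    fix j assume j: "j \<in> {1..m}"
    then have j1: "1 \<le> j" "j \<le> m" by auto
    have e1: "D1 m h l t L v (Ka j 1) = D123 m h l t L (iota0 a) (Ka j 1)" using eq by simp
    have e2: "D1 m h l t L v (Ka j (h j)) = D123 m h l t L (iota0 a) (Ka j (h j))" using eq by simp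
    note E1 = e1[unfolded D1_Ka[OF j1] D123_Ka[OF j1] cv d]
    note E2 = e2[unfolded D1_Ka[OF j1] D123_Ka[OF j1] cv d]
    { assume "h j = 1"
      then show "(\<Sum>p\<in>Eset m. \<delta> p * etav m B p (2*j-1)) = a (2*j)" using E1 by simp }
    { assume "h j \<noteq> 1"
      then show "a (2*j) = 0" using E2 by simp
      show "(\<Sum>p\<in>Eset m. \<delta> p * etav m B p (2*j-1)) = 0" using E1 \<open>h j \<noteq> 1\<close> by simp }
  qed
qed

lemma main_aux:
  fixes m :: nat and gr :: "nat \<Rightarrow> int" and M :: "nat \<Rightarrow> nat \<Rightarrow> bit poly"
    and xi eta :: "nat \<Rightarrow> cvec" and A B :: "nat \<Rightarrow> nat \<Rightarrow> bit poly"
    and k :: int and a :: "nat \<Rightarrow> bit" and \<delta> :: "nat \<Rightarrow> bit"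
  assumes cx: "filtered_complex (2*m+1) gr M"
    and vs: "vert_simplified (2*m+1) gr M m xi"
    and hs: "horiz_simplified (2*m+1) gr M m eta"
    and comp: "bases_compatible (2*m+1) gr xi eta A B"
    and aB: "a \<in> Bprime (2*m+1) gr m xi eta B k" and a0: "a \<noteq> 0"
    and dl: "\<forall>j\<in>{1..m}.
       (hV (2*m+1) gr xi j = 1 \<longrightarrow> (\<Sum>p\<in>Eset m. \<delta> p * etav m B p (2*j-1)) = a (2*j)) \<and>
       (hV (2*m+1) gr xi j \<noteq> 1 \<longrightarrow> a (2*j) = 0 \<and> (\<Sum>p\<in>Eset m. \<delta> p * etav m B p (2*j-1)) = 0)"
  shows False
proof -
  define r where "r = 2*m+1"
  note hom = homog[OF r_def[unfolded r_def] vs hs comp]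
  have aBk: "a \<in> Bk (2*m+1) gr m xi eta B k"
    and aX: "a \<in> F2span {xiv (2*j) | j. 1 \<le> j \<and> j \<le> m}"
    and aE: "a \<in> F2span {etav m B (2*j - 1) | j. 1 \<le> j \<and> j \<le> m}"
    using aB unfolding Bprime_def by auto
  have suppk: "\<And>q. a q \<noteq> 0 \<Longrightarrow> Alex (2*m+1) gr (xi q) = k \<and> q < 2*m+1"
  proof -
    fix q assume "a q \<noteq> 0"
    show "Alex (2*m+1) gr (xi q) = k \<and> q < 2*m+1"
    proof (rule F2span_supp[OF aBk[unfolded Bk_def] _ \<open>a q \<noteq> 0\<close>])
      fix y q' assume y: "y \<in> {xiv p | p. p \<le> 2*m \<and> Alex (2*m+1) gr (xi p) = k} \<union>
                                  {etav m B p | p. p \<le> 2*m \<and> Alex (2*m+1) gr (eta p) = k}"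
        and yq: "y q' \<noteq> 0"
      show "Alex (2*m+1) gr (xi q') = k \<and> q' < 2*m+1"
      proof (cases "y \<in> {xiv p | p. p \<le> 2*m \<and> Alex (2*m+1) gr (xi p) = k}")
        case True
        then obtain p where p: "y = xiv p" "p \<le> 2*m" "Alex (2*m+1) gr (xi p) = k" by blast
        then have "q' = p" using yq unfolding xiv_def by (auto split: if_splits)
        then show ?thesis using p by simp
      next
        case False
        then obtain p where p: "y = etav m B p" "p \<le> 2*m" "Alex (2*m+1) gr (eta p) = k" using y by blast
        then have "q' \<le> 2*m" using yq unfolding etav_def by (auto split: if_splits)
        then show ?thesis using hom[of p q'] p yq by simp
      qed
    qed
  qed
  have supp2: "\<And>q. a q \<noteq> 0 \<Longrightarrow> \<exists>j\<in>{1..m}. q = 2*j"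
  proof -
    fix q assume "a q \<noteq> 0"
    show "\<exists>j\<in>{1..m}. q = 2*j"
    proof (rule F2span_supp[OF aX _ \<open>a q \<noteq> 0\<close>])
      fix y q' assume "y \<in> {xiv (2*j) | j. 1 \<le> j \<and> j \<le> m}" "y q' \<noteq> 0"
      then show "\<exists>j\<in>{1..m}. q' = 2*j" unfolding xiv_def by (auto split: if_splits)
    qed
  qed
  obtain T where T: "T \<subseteq> {etav m B (2*j - 1) | j. 1 \<le> j \<and> j \<le> m}" "finite T" "a = (\<Sum>y\<in>T. y)"
    using aE unfolding F2span_def by blast
  have "T \<subseteq> (\<lambda>j. etav m B (2*j - 1)) ` {1..m}" using T(1) by auto
  then obtain P0 where P0: "P0 \<subseteq> {1..m}" "inj_on (\<lambda>j. etav m B (2*j - 1)) P0"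
      "T = (\<lambda>j. etav m B (2*j - 1)) ` P0"
    by (auto simp: subset_image_inj)
  have aP0: "a = (\<Sum>p\<in>P0. etav m B (2*p - 1))" using T(3) P0 by (simp add: sum.reindex)
  define P where "P = {p \<in> P0. Alex (2*m+1) gr (eta (2*p-1)) = k}"
  have finP0: "finite P0" using P0(1) finite_subset by blast
  have Psub: "P \<subseteq> {1..m}" unfolding P_def using P0 by auto
  have PA: "\<And>p. p \<in> P \<Longrightarrow> Alex (2*m+1) gr (eta (2*p-1)) = k" unfolding P_def by auto
  have aP: "\<And>q. a q = (\<Sum>p\<in>P. etav m B (2*p-1) q)"
  proof -
    fix q
    have aq: "a q = (\<Sum>p\<in>P0. etav m B (2*p-1) q)" unfolding aP0 by (simp add: sum_fun_apply)
    show "a q = (\<Sum>p\<in>P. etav m B (2*p-1) q)"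
    proof (cases "Alex (2*m+1) gr (xi q) = k \<and> q < 2*m+1")
      case True
      have "(\<Sum>p\<in>P0. etav m B (2*p-1) q) = (\<Sum>p\<in>P. etav m B (2*p-1) q)"
      proof (rule sum.mono_neutral_right[OF finP0])
        show "P \<subseteq> P0" unfolding P_def by auto
        show "\<forall>p\<in>P0 - P. etav m B (2*p-1) q = 0"
        proof
          fix p assume p: "p \<in> P0 - P"
          show "etav m B (2*p-1) q = 0"
          proof (rule ccontr)
            assume "etav m B (2*p-1) q \<noteq> 0"
            moreover have "2*p-1 < 2*m+1" using p P0(1) by force
            ultimately have "Alex (2*m+1) gr (eta (2*p-1)) = k" using hom[of "2*p-1" q] True by simp
            then show False using p unfolding P_def by auto
          qed
        qed
      qed
      then show ?thesis using aq by simp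
    next
      case False
      then have "a q = 0" using suppk by blast
      moreover have "(\<Sum>p\<in>P. etav m B (2*p-1) q) = 0"
      proof (rule sum.neutral, rule ballI)
        fix p assume p: "p \<in> P"
        show "etav m B (2*p-1) q = 0"
        proof (rule ccontr)
          assume e: "etav m B (2*p-1) q \<noteq> 0"
          then have "q \<le> 2*m" unfolding etav_def by (auto split: if_splits)
          moreover have "2*p-1 < 2*m+1" using p Psub by force
          ultimately have "Alex (2*m+1) gr (xi q) = k" using hom[of "2*p-1" q] e PA[OF p] by simp
          then show False using False \<open>q \<le> 2*m\<close> by simp
        qed
      qed
      ultimately show ?thesis by simp
    qed
  qed
  have Pne: "P \<noteq> {}"
  proof
    assume "P = {}"
    then have "\<And>q. a q = 0" using aP by simp
    then show False using a0 by (simp add: fun_eq_iff)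
  qed
  have asupp: "\<And>q. a q \<noteq> 0 \<Longrightarrow> (\<exists>j\<in>{1..m}. q = 2*j) \<and> Alex (2*m+1) gr (xi q) = k"
    using suppk supp2 by blast
  show False
    apply (rule core[OF refl vs hs comp cx, of a k P \<delta>])
         apply (rule asupp, assumption)
        apply (rule Psub)
       apply (rule Pne)
      apply (rule PA, assumption)
     apply (rule aP)
    apply (rule dl[rule_format], assumption)
    done
qed

theorem lemma3p5:
  fixes m :: nat and gr :: "nat \<Rightarrow> int" and M :: "nat \<Rightarrow> nat \<Rightarrow> bit poly"
    and xi eta :: "nat \<Rightarrow> cvec" and A B :: "nat \<Rightarrow> nat \<Rightarrow> bit poly"
    and n k :: int and L :: bool and a :: "nat \<Rightarrow> bit"
  assumes cx: "filtered_complex (2*m+1) gr M" and red: "reduced (2*m+1) gr M"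
    and vs: "vert_simplified (2*m+1) gr M m xi"
    and hs: "horiz_simplified (2*m+1) gr M m eta"
    and comp: "bases_compatible (2*m+1) gr xi eta A B"
    and nontriv: "0 < knot_genus (2*m+1) gr xi"
    and Lthin: "L \<longrightarrow> (\<forall>i. card {p. p < 2*m+1 \<and> Alex (2*m+1) gr (xi p) = i} \<le> 1)"
    and k1: "- knot_genus (2*m+1) gr xi \<le> k" and k2: "k \<le> knot_genus (2*m+1) gr xi"
    and aB: "a \<in> Bprime (2*m+1) gr m xi eta B k" and a0: "a \<noteq> 0"
  shows "\<not> (\<exists>b\<in>Nmod m (hV (2*m+1) gr xi) (lH (2*m+1) gr eta) (n - 2 * tau (2*m+1) gr xi) L.
            D1 m (hV (2*m+1) gr xi) (lH (2*m+1) gr eta) (n - 2 * tau (2*m+1) gr xi) L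
              (D2 m (hV (2*m+1) gr xi) (lH (2*m+1) gr eta) B (n - 2 * tau (2*m+1) gr xi) L b)
            = D123 m (hV (2*m+1) gr xi) (lH (2*m+1) gr eta) (n - 2 * tau (2*m+1) gr xi) L (iota0 a))
       \<and> \<not> (\<exists>b\<in>Nmod m (hV (2*m+1) gr xi) (lH (2*m+1) gr eta) (n - 2 * tau (2*m+1) gr xi) L.
            D1 m (hV (2*m+1) gr xi) (lH (2*m+1) gr eta) (n - 2 * tau (2*m+1) gr xi) L
              (D12 m (hV (2*m+1) gr xi) (lH (2*m+1) gr eta) B (n - 2 * tau (2*m+1) gr xi) L b)
            = D123 m (hV (2*m+1) gr xi) (lH (2*m+1) gr eta) (n - 2 * tau (2*m+1) gr xi) L (iota0 a))"
proof -
  let ?h = "hV (2*m+1) gr xi" and ?l = "lH (2*m+1) gr eta" and ?t = "n - 2 * tau (2*m+1) gr xi"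
  have gen: False if c: "c \<in> Espan m B" and eq: "D1 m ?h ?l ?t L v = D123 m ?h ?l ?t L (iota0 a)"
    and cv: "\<And>q. v (Xi q) = c q" for c v
  proof -
    obtain \<delta> where "\<forall>j\<in>{1..m}.
       (?h j = 1 \<longrightarrow> (\<Sum>p\<in>Eset m. \<delta> p * etav m B p (2*j-1)) = a (2*j)) \<and>
       (?h j \<noteq> 1 \<longrightarrow> a (2*j) = 0 \<and> (\<Sum>p\<in>Eset m. \<delta> p * etav m B p (2*j-1)) = 0)"
      using eqn_dl[OF c eq cv] by blast
    then show False using main_aux[OF cx vs hs comp aB a0] by blast
  qed
  show ?thesis
  proof (intro conjI notI)
    assume "\<exists>b\<in>Nmod m ?h ?l ?t L. D1 m ?h ?l ?t L (D2 m ?h ?l B ?t L b) = D123 m ?h ?l ?t L (iota0 a)"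
    then obtain b where eq: "D1 m ?h ?l ?t L (D2 m ?h ?l B ?t L b) = D123 m ?h ?l ?t L (iota0 a)" by blast
    have "(\<lambda>q. D2 m ?h ?l B ?t L b (Xi q)) \<in> Espan m B"
      unfolding D2_def by (rule Dx_Espan) (rule D2gen_Xi)
    then show False using gen eq by blast
  next
    assume "\<exists>b\<in>Nmod m ?h ?l ?t L. D1 m ?h ?l ?t L (D12 m ?h ?l B ?t L b) = D123 m ?h ?l ?t L (iota0 a)"
    then obtain b where eq: "D1 m ?h ?l ?t L (D12 m ?h ?l B ?t L b) = D123 m ?h ?l ?t L (iota0 a)" by blast
    have "(\<lambda>q. D12 m ?h ?l B ?t L b (Xi q)) \<in> Espan m B"
      unfolding D12_def by (rule Dx_Espan) (rule D12gen_Xi)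
    then show False using gen eq by blast
  qed
qed

end
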